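(* Let $S=\langle \underline{S},\sqcap,\sqcup,\Rightarrow,L,\neg,0,1\rangle$ be a finite rough algebra (as arises from a finite approximation space), let $M(x)=\neg L(\neg x)$, and let $T$ be the coapproximability relation on $S$: $(a,b)\in T$ iff there exists $c\in\underline{S}$ with $L(c)\le a\le M(c)$ and $L(c)\le b\le M(c)$. Then every block $B=\{a_i\}$ of $T$ is an interval of the lattice $\langle\underline{S},\sqcap,\sqcup\rangle$ of the form $[\bigwedge a_i,\bigvee a_i]=\{x\in\underline{S}:\bigwedge_i a_i\le x\le\bigvee_i a_i\}$.
   Context: A pre-rough algebra is an algebra $\langle\underline{S},\sqcap,\sqcup,\Rightarrow,L,\neg,0,1\rangle$ of type $(2,2,2,1,1,0,0)$ such that: $\langle\underline{S},\sqcap,\sqcup,\neg\rangle$ is a de Morgan lattice (with bounds $0,1$); $\neg\neg a=a$; $L(a)\sqcap a=L(a)$; $LL(a)=L(a)$; $L(1)=1$; $L(a\sqcap b)=L(a)\sqcap L(b)$; $\neg L\neg L(a)=L(a)$; $\neg L(a)\sqcup L(a)=1$; $L(a\sqcup b)=L(a)\sqcup L(b)$; if $L(a)\sqcap L(b)=L(a)$ and $\neg L(\neg(a\sqcap b))=\neg L(\neg a)$ then $a\sqcap b=a$; and $a\Rightarrow b=(\neg L(a)\sqcup L(b))\sqcap(L(\neg a)\sqcup\neg L(\neg b))$. A rough algebra is a completely distributive pre-rough algebra. For a reflexive symmetric relation $T$ on a set $H$, a block of $T$ is a maximal subset $B\subseteq H$ with $B\times B\subseteq T$. Meets and joins $\bigwedge,\bigvee$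 are taken in the lattice $\langle\underline{S},\sqcap,\sqcup\rangle$. *)

theory Defs
  imports Main
begin

text \<open>Algebras are given on the whole (finite) type 'a, with explicit operations
  meet (\<sqinter>), join (\<sqcup>), imp (\<Rightarrow>), L, neg (\<not>), zero, one.\<close>

definition lle :: "('a \<Rightarrow> 'a \<Rightarrow> 'a) \<Rightarrow> 'a \<Rightarrow> 'a \<Rightarrow> bool" where
  "lle meet a b \<longleftrightarrow> meet a b = a"

definition is_glb :: "('a \<Rightarrow> 'a \<Rightarrow> 'a) \<Rightarrow> 'a set \<Rightarrow> 'a \<Rightarrow> bool" where
  "is_glb meet X g \<longleftrightarrow> (\<forall>x\<in>X. lle meet g x) \<and> (\<forall>y. (\<forall>x\<in>X. lle meet y x) \<longrightarrow> lle meet y g)"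

definition is_lub :: "('a \<Rightarrow> 'a \<Rightarrow> 'a) \<Rightarrow> 'a set \<Rightarrow> 'a \<Rightarrow> bool" where
  "is_lub meet X s \<longleftrightarrow> (\<forall>x\<in>X. lle meet x s) \<and> (\<forall>y. (\<forall>x\<in>X. lle meet x y) \<longrightarrow> lle meet s y)"

definition de_morgan_lattice ::
  "('a \<Rightarrow> 'a \<Rightarrow> 'a) \<Rightarrow> ('a \<Rightarrow> 'a \<Rightarrow> 'a) \<Rightarrow> ('a \<Rightarrow> 'a) \<Rightarrow> 'a \<Rightarrow> 'a \<Rightarrow> bool" where
  "de_morgan_lattice meet join neg zero one \<longleftrightarrow>
     (\<forall>a b c. meet (meet a b) c = meet a (meet b c)) \<and>
     (\<forall>a b c. join (join a b) c = join a (join b c)) \<and>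
     (\<forall>a b. meet a b = meet b a) \<and>
     (\<forall>a b. join a b = join b a) \<and>
     (\<forall>a b. meet a (join a b) = a) \<and>
     (\<forall>a b. join a (meet a b) = a) \<and>
     (\<forall>a b c. meet a (join b c) = join (meet a b) (meet a c)) \<and>
     (\<forall>a. meet a zero = zero) \<and>
     (\<forall>a. join a one = one) \<and>
     (\<forall>a b. neg (join a b) = meet (neg a) (neg b)) \<and>
     (\<forall>a. neg (neg a) = a)"

definition pre_rough_algebra ::
  "('a \<Rightarrow> 'a \<Rightarrow> 'a) \<Rightarrow> ('a \<Rightarrow> 'a \<Rightarrow> 'a) \<Rightarrow> ('a \<Rightarrow> 'a \<Rightarrow> 'a) \<Rightarrow> ('a \<Rightarrow> 'a) \<Rightarrow> ('a \<Rightarrow> 'a)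
     \<Rightarrow> 'a \<Rightarrow> 'a \<Rightarrow> bool" where
  "pre_rough_algebra meet join imp L neg zero one \<longleftrightarrow>
     de_morgan_lattice meet join neg zero one \<and>
     (\<forall>a. neg (neg a) = a) \<and>
     (\<forall>a. meet (L a) a = L a) \<and>
     (\<forall>a. L (L a) = L a) \<and>
     L one = one \<and>
     (\<forall>a b. L (meet a b) = meet (L a) (L b)) \<and>
     (\<forall>a. neg (L (neg (L a))) = L a) \<and>
     (\<forall>a. join (neg (L a)) (L a) = one) \<and>
     (\<forall>a b. L (join a b) = join (L a) (L b)) \<and>
     (\<forall>a b. meet (L a) (L b) = L a \<and> neg (L (neg (meet a b))) = neg (L (neg a))
              \<longrightarrow> meet a b = a) \<and>
     (\<forall>a b. imp a b = meet (join (neg (L a)) (L b)) (join (L (neg a)) (neg (L (neg b)))))"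

definition completely_distributive :: "('a \<Rightarrow> 'a \<Rightarrow> 'a) \<Rightarrow> bool" where
  "completely_distributive meet \<longleftrightarrow>
     (\<forall>X. \<exists>g. is_glb meet X g) \<and> (\<forall>X. \<exists>s. is_lub meet X s) \<and>
     (\<forall>\<A> :: 'a set set. \<forall>m sups.
        (\<forall>A\<in>\<A>. is_lub meet A (sups A)) \<and> is_glb meet (sups ` \<A>) m \<longrightarrow>
        is_lub meet {g. \<exists>f. (\<forall>A\<in>\<A>. f A \<in> A) \<and> is_glb meet (f ` \<A>) g} m) \<and>
     (\<forall>\<A> :: 'a set set. \<forall>m infs.
        (\<forall>A\<in>\<A>. is_glb meet A (infs A)) \<and> is_lub meet (infs ` \<A>) m \<longrightarrow>
        is_glb meet {s. \<exists>f. (\<forall>A\<in>\<A>. f A \<in> A) \<and> is_lub meet (f ` \<A>) s} m)"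

definition rough_algebra ::
  "('a \<Rightarrow> 'a \<Rightarrow> 'a) \<Rightarrow> ('a \<Rightarrow> 'a \<Rightarrow> 'a) \<Rightarrow> ('a \<Rightarrow> 'a \<Rightarrow> 'a) \<Rightarrow> ('a \<Rightarrow> 'a) \<Rightarrow> ('a \<Rightarrow> 'a)
     \<Rightarrow> 'a \<Rightarrow> 'a \<Rightarrow> bool" where
  "rough_algebra meet join imp L neg zero one \<longleftrightarrow>
     pre_rough_algebra meet join imp L neg zero one \<and> completely_distributive meet"

definition coapprox :: "('a \<Rightarrow> 'a \<Rightarrow> 'a) \<Rightarrow> ('a \<Rightarrow> 'a) \<Rightarrow> ('a \<Rightarrow> 'a) \<Rightarrow> 'a rel" where
  "coapprox meet L neg = {(a, b). \<exists>c.
      lle meet (L c) a \<and> lle meet a (neg (L (neg c))) \<and>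
      lle meet (L c) b \<and> lle meet b (neg (L (neg c)))}"

definition is_block :: "'a set \<Rightarrow> 'a rel \<Rightarrow> 'a set \<Rightarrow> bool" where
  "is_block H T B \<longleftrightarrow> B \<subseteq> H \<and> B \<times> B \<subseteq> T \<and>
     (\<forall>B'. B \<subseteq> B' \<and> B' \<subseteq> H \<and> B' \<times> B' \<subseteq> T \<longrightarrow> B' = B)"

end

theory Submission
  imports Defs
begin

locale pra =
  fixes meet join :: "'a \<Rightarrow> 'a \<Rightarrow> 'a" and L neg :: "'a \<Rightarrow> 'a" and zero one :: 'a
  assumes massoc: "\<And>a b c. meet (meet a b) c = meet a (meet b c)"
    and jassoc: "\<And>a b c. join (join a b) c = join a (join b c)"
    and mcomm: "\<And>a b. meet a b = meet b a"
    and jcomm: "\<And>a b. join a b = join b a"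
    and mabs: "\<And>a b. meet a (join a b) = a"
    and jabs: "\<And>a b. join a (meet a b) = a"
    and dist: "\<And>a b c. meet a (join b c) = join (meet a b) (meet a c)"
    and mzero: "\<And>a. meet a zero = zero"
    and jone: "\<And>a. join a one = one"
    and dm: "\<And>a b. neg (join a b) = meet (neg a) (neg b)"
    and nn: "\<And>a. neg (neg a) = a"
    and Lle: "\<And>a. meet (L a) a = L a"
    and LL: "\<And>a. L (L a) = L a"
    and Lmeet: "\<And>a b. L (meet a b) = meet (L a) (L b)"
    and LnL: "\<And>a. neg (L (neg (L a))) = L a"
    and Lcompl: "\<And>a. join (neg (L a)) (L a) = one"
    and Ljoin: "\<And>a b. L (join a b) = join (L a) (L b)"
    and Lone: "L one = one"
begin

lemma jabs_eq: "join a b = b \<longleftrightarrow> meet a b = a"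
  by (metis mabs jabs mcomm jcomm)

sublocale lat: lattice meet "lle meet" "\<lambda>x y. lle meet x y \<and> x \<noteq> y" join
proof
  fix x y z
  show "(lle meet x y \<and> x \<noteq> y) = (lle meet x y \<and> \<not> lle meet y x)"
    unfolding lle_def by (metis mcomm)
  show "lle meet x x" unfolding lle_def by (metis mabs jabs)
  show "lle meet x y \<Longrightarrow> lle meet y z \<Longrightarrow> lle meet x z" unfolding lle_def by (metis massoc)
  show "lle meet x y \<Longrightarrow> lle meet y x \<Longrightarrow> x = y" unfolding lle_def by (metis mcomm)
  show "lle meet (meet x y) x" unfolding lle_def by (metis massoc mcomm mabs jabs)
  show "lle meet (meet x y) y" unfolding lle_def by (metis massoc mcomm mabs jabs)
  show "lle meet x y \<Longrightarrow> lle meet x z \<Longrightarrow> lle meet x (meet y z)" unfolding lle_def by (metis massoc)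
  show "lle meet x (join x y)" unfolding lle_def by (metis mabs)
  show "lle meet y (join x y)" unfolding lle_def by (metis mabs jcomm)
  show "lle meet y x \<Longrightarrow> lle meet z x \<Longrightarrow> lle meet (join y z) x" unfolding lle_def
    using jabs_eq jassoc by metis
qed

lemma dist2: "join a (meet b c) = meet (join a b) (join a c)"
  by (rule lat.distrib_imp1) (rule dist)

lemma le_def: "lle meet a b \<longleftrightarrow> meet a b = a" by (simp add: lle_def)

lemma L_le: "lle meet (L a) a" using Lle le_def by blast

lemma L_mono: "lle meet a b \<Longrightarrow> lle meet (L a) (L b)"
  by (metis Lmeet le_def)

lemma neg_meet: "neg (meet a b) = join (neg a) (neg b)"
  by (metis dm nn)

lemma neg_anti: "lle meet a b \<Longrightarrow> lle meet (neg b) (neg a)"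
  by (metis dm jabs_eq le_def mcomm)

lemma neg_one: "neg one = zero"
  by (metis dm jone nn mcomm mzero)

lemma LnegL: "L (neg (L a)) = neg (L a)"
  by (metis LnL nn)

lemma le_one: "lle meet a one" by (metis jone mabs le_def)
lemma zero_le: "lle meet zero a" by (metis mzero mcomm le_def)

lemma L_zero: "L zero = zero"
  by (metis Lle mzero)

lemma LcompL: "meet (L a) (neg (L a)) = zero"
  by (metis Lcompl neg_one neg_meet nn jcomm)

definition M where "M x = neg (L (neg x))"

lemma M_join: "M (join a b) = join (M a) (M b)"
  unfolding M_def by (simp only: dm Lmeet neg_meet)
lemma M_meet: "M (meet a b) = meet (M a) (M b)"
  unfolding M_def by (simp only: dm Ljoin neg_meet)
lemma M_mono: "lle meet a b \<Longrightarrow> lle meet (M a) (M b)"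
  by (metis M_meet le_def)
lemma le_M: "lle meet a (M a)"
  unfolding M_def by (metis L_le neg_anti nn)
lemma M_of_L: "M (L a) = L a" unfolding M_def by (rule LnL)
lemma MnegL: "M (neg (L a)) = neg (L a)" unfolding M_def by (metis nn LL)

lemma zlem:
  assumes "finite Q"
  shows "Q \<subseteq> coapprox meet L neg \<Longrightarrow>
    \<exists>z. L z = zero \<and> (\<forall>(a,b)\<in>Q. lle meet a (join (M z) (L b)))"
  using assms
proof (induction Q rule: finite_induct)
  case empty
  show ?case using L_zero by auto
next
  case (insert p Q)
  obtain a b where p: "p = (a,b)" by (cases p)
  from insert obtain z where z: "L z = zero" "\<forall>(a,b)\<in>Q. lle meet a (join (M z) (L b))" by auto
  from insert p have "(a,b) \<in> coapprox meet L neg" by auto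
  then obtain c where c: "lle meet (L c) a" "lle meet a (neg (L (neg c)))"
      "lle meet (L c) b" "lle meet b (neg (L (neg c)))"
    unfolding coapprox_def by auto
  define z' where "z' = join z (meet c (neg (L c)))"
  have Lz': "L z' = zero"
    unfolding z'_def Ljoin Lmeet LnegL LcompL z by simp
  have Mz': "M z' = join (M z) (meet (M c) (neg (L c)))"
    unfolding z'_def M_join M_meet MnegL ..
  have old: "\<forall>(a,b)\<in>Q. lle meet a (join (M z') (L b))"
  proof (intro ballI, clarify)
    fix a' b' assume "(a', b') \<in> Q"
    with z have "lle meet a' (join (M z) (L b'))" by auto
    moreover have "lle meet (join (M z) (L b')) (join (M z') (L b'))"
      unfolding Mz' by (meson lat.sup.cobounded1 lat.sup_mono lat.order_refl)
    ultimately show "lle meet a' (join (M z') (L b'))" using lat.order_trans by blast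
  qed
  have "lle meet (L c) (M c)" using L_le le_M lat.order_trans by blast
  hence j1: "join (M c) (L c) = M c" by (metis lat.sup.absorb1)
  have "M c = meet (join (M c) (L c)) (join (neg (L c)) (L c))"
    using j1 Lcompl lat.inf_absorb1 le_one by metis
  also have "\<dots> = join (meet (M c) (neg (L c))) (L c)"
    by (metis dist2 jcomm)
  also have "lle meet \<dots> (join (M z') (L b))"
    unfolding Mz' using L_mono[OF c(3)] LL
    by (metis lat.sup.cobounded2 lat.sup_mono)
  finally have "lle meet (M c) (join (M z') (L b))" .
  hence new: "lle meet a (join (M z') (L b))"
    using c(2) unfolding M_def using lat.order_trans by blast
  show ?case using Lz' old new p by auto
qed

lemma glblem:
  assumes "finite B"
  shows "\<exists>g. is_glb meet B g \<and>
    (\<forall>y a. (\<forall>b\<in>B. lle meet a (join y (L b))) \<longrightarrow> lle meet a (join y (L g)))"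
  using assms
proof (induction B rule: finite_induct)
  case empty
  have "is_glb meet {} one" unfolding is_glb_def using le_one by auto
  moreover have "lle meet a (join y (L one))" for y a
    using Lone jone le_one by simp
  ultimately show ?case by blast
next
  case (insert b B)
  then obtain g where g: "is_glb meet B g"
    "\<forall>y a. (\<forall>b\<in>B. lle meet a (join y (L b))) \<longrightarrow> lle meet a (join y (L g))" by auto
  have "is_glb meet (insert b B) (meet b g)"
    using g(1) unfolding is_glb_def
    by (auto intro: lat.inf.coboundedI2 lat.inf_greatest lat.inf_le1)
  moreover have "lle meet a (join y (L (meet b g)))"
    if "\<forall>b'\<in>insert b B. lle meet a (join y (L b'))" for y a
  proof -
    have "lle meet a (join y (L b))" "lle meet a (join y (L g))" using that g(2) by auto
    hence "lle meet a (meet (join y (L b)) (join y (L g)))" by (rule lat.inf_greatest)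
    thus ?thesis by (simp add: Lmeet dist2)
  qed
  ultimately show ?case by blast
qed

end

lemma to_pra:
  assumes "pre_rough_algebra meet join imp L neg zero one"
  shows "pra meet join L neg zero one"
  using assms unfolding pre_rough_algebra_def de_morgan_lattice_def pra_def
  by (elim conjE) (intro conjI; assumption)

theorem proposition2p2:
  fixes meet join imp :: "'a \<Rightarrow> 'a \<Rightarrow> 'a" and L neg :: "'a \<Rightarrow> 'a" and zero one :: 'a
  assumes "finite (UNIV :: 'a set)"
    and "rough_algebra meet join imp L neg zero one"
    and "is_block UNIV (coapprox meet L neg) B"
  shows "\<exists>g s. is_glb meet B g \<and> is_lub meet B s \<and> B = {x. lle meet g x \<and> lle meet x s}"
proof -
  interpret pra meet join L neg zero one
    using assms(2) unfolding rough_algebra_def by (blast intro: to_pra)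
  let ?T = "coapprox meet L neg"
  have blk: "B \<times> B \<subseteq> ?T" "\<And>B'. B \<subseteq> B' \<Longrightarrow> B' \<times> B' \<subseteq> ?T \<Longrightarrow> B' = B"
    using assms(3) unfolding is_block_def by auto
  have finB0: "finite B" by (rule finite_subset[OF subset_UNIV assms(1)])
  have finB: "finite (B \<times> B)" using finB0 by simp
  obtain z where z: "L z = zero" "\<forall>(a,b)\<in>B \<times> B. lle meet a (join (M z) (L b))"
    using zlem[OF finB blk(1)] by blast
  obtain g where g: "is_glb meet B g"
    "\<forall>y a. (\<forall>b\<in>B. lle meet a (join y (L b))) \<longrightarrow> lle meet a (join y (L g))"
    using glblem[OF finB0] by blast
  have cd: "completely_distributive meet" using assms(2) unfolding rough_algebra_def by simp
  have "\<forall>X. \<exists>s. is_lub meet X s" using cd unfolding completely_distributive_def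
    by (elim conjE) assumption
  then obtain s where s: "is_lub meet B s" by blast
  define c where "c = join z (L g)"
  have Lc: "L c = L g" unfolding c_def Ljoin LL z(1)
    by (metis jcomm lat.sup.absorb2 zero_le)
  have Mc: "M c = join (M z) (L g)" unfolding c_def M_join M_of_L ..
  have aMc: "lle meet a (M c)" if "a \<in> B" for a
  proof -
    have "\<forall>b\<in>B. lle meet a (join (M z) (L b))" using z(2) that by blast
    thus ?thesis unfolding Mc using g(2) by blast
  qed
  hence sMc: "lle meet s (M c)" using s unfolding is_lub_def by blast
  have Lgg: "lle meet (L g) g" by (rule L_le)
  define B' where "B' = {x. lle meet g x \<and> lle meet x s}"
  have sub: "B \<subseteq> B'" using g(1) s unfolding B'_def is_glb_def is_lub_def by auto
  have "B' \<times> B' \<subseteq> ?T"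
  proof clarify
    fix x y assume "x \<in> B'" "y \<in> B'"
    hence x: "lle meet g x" "lle meet x s" and y: "lle meet g y" "lle meet y s"
      unfolding B'_def by auto
    have "lle meet (L c) x" unfolding Lc by (rule lat.order_trans[OF Lgg x(1)])
    moreover have "lle meet (L c) y" unfolding Lc by (rule lat.order_trans[OF Lgg y(1)])
    moreover have "lle meet x (M c)" by (rule lat.order_trans[OF x(2) sMc])
    moreover have "lle meet y (M c)" by (rule lat.order_trans[OF y(2) sMc])
    ultimately show "(x, y) \<in> ?T" unfolding coapprox_def M_def by blast
  qed
  hence "B' = B" using blk(2)[OF sub] by simp
  hence "B = {x. lle meet g x \<and> lle meet x s}" unfolding B'_def by simp
  thus ?thesis using g(1) s by blast
qed


end
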